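(* Let $\alpha$ be a differentiable real-valued function on the set of real symmetric positive definite $3\times 3$ matrices, and let $h = \frac{\partial \alpha}{\partial C}$ be its gradient, i.e. the symmetric-matrix-valued function such that $D\alpha(C)\,\delta C = \mathrm{tr}\big(h(C)\,\delta C\big)$ for all symmetric $\delta C$. Assume $h$ is isotropic: $R^T h(C) R = h(R^T C R)$ for every rotation $R$ (real $3\times 3$ matrix with $R^TR=I$, $\det R=1$) and every symmetric positive definite $C$. For a symmetric positive definite $B$ set $\frac{\sigma}{\rho} := B^{1/2} h(B) B^{1/2}$. Then the function $\alpha\circ\exp$, defined on real symmetric $3\times 3$ matrices, is differentiable and its gradient at $\ln B$ equals $\frac{\sigma}{\rho}$: for every symmetric positive definite $B$ and every symmetric $\delta$, $$D(\alpha\circ\exp)(\ln B)\,\delta = \mathrm{tr}\Big(\frac{\sigma}{\rho}\,\delta\Big),\qquad\text{i.e.}\qquad \frac{\sigma}{\rho} = \frac{\partial(\alpha\circ\exp)}{\partial(\ln B)}.$$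
   Context: Physical interpretation: for a deformation gradient $F$ with polar decomposition $F=RU$, $C=F^TF$ is the right and $B=FF^T$ the left Cauchy–Green tensor; the hyperelastic constitutive law is $\Sigma/\rho_0 = \frac{\partial\alpha}{\partial C}(C)$ with $\Sigma$ the second Piola–Kirchhoff stress and $\rho_0$ the initial mass density; the Cauchy stress $\sigma$ and current density $\rho$ satisfy $\sigma/\rho = F(\Sigma/\rho_0)F^T$, which under isotropy equals $B^{1/2}h(B)B^{1/2}$. Here $B^{1/2}$ is the symmetric positive definite square root of $B$, $\ln B$ is the unique symmetric matrix with $\exp(\ln B)=B$, and gradients are taken with respect to the inner product $(X,Y)\mapsto \mathrm{tr}(XY)$ on symmetric matrices. *)

theory Defs
  imports "HOL-Analysis.Analysis"
begin

type_synonym mat3 = "real^3^3"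

definition sym_mat :: "mat3 \<Rightarrow> bool" where
  "sym_mat A \<longleftrightarrow> transpose A = A"

definition Sym :: "mat3 set" where
  "Sym = {A. sym_mat A}"

definition spd :: "mat3 \<Rightarrow> bool" where
  "spd A \<longleftrightarrow> sym_mat A \<and> (\<forall>x. x \<noteq> 0 \<longrightarrow> x \<bullet> (A *v x) > 0)"

definition rotation :: "mat3 \<Rightarrow> bool" where
  "rotation R \<longleftrightarrow> transpose R ** R = mat 1 \<and> det R = 1"

primrec matpow :: "mat3 \<Rightarrow> nat \<Rightarrow> mat3" where
  "matpow A 0 = mat 1"
| "matpow A (Suc n) = A ** matpow A n"

definition mexp :: "mat3 \<Rightarrow> mat3" where
  "mexp A = (\<Sum>n. (1 / fact n) *\<^sub>R matpow A n)"

definition msqrt :: "mat3 \<Rightarrow> mat3" where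
  "msqrt B = (THE S. spd S \<and> S ** S = B)"

definition mln :: "mat3 \<Rightarrow> mat3" where
  "mln B = (THE L. sym_mat L \<and> mexp L = B)"

end

theory Submission
  imports Defs
begin


lemma sym_inner: fixes A :: "real^'n^'n"
  assumes "transpose A = A" shows "u \<bullet> (A *v v) = v \<bullet> (A *v u)"
proof -
  have "u \<bullet> (A *v v) = (u v* A) \<bullet> v" by (simp add: dot_lmul_matrix)
  also have "u v* A = A *v u" using assms vector_transpose_matrix[of u A] by simp
  finally show ?thesis by (simp add: inner_commute)
qed

lemma max_eigvec:
  fixes A :: "real^'n^'n"
  assumes sym: "transpose A = A" and W: "subspace W" and inv: "\<forall>x\<in>W. A *v x \<in> W"
    and ne: "x0 \<in> W" "x0 \<noteq> 0"
  shows "\<exists>u\<in>W. norm u = 1 \<and> A *v u = (u \<bullet> (A *v u)) *\<^sub>R u"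
proof -
  define q where "q x = x \<bullet> (A *v x)" for x
  define S where "S = W \<inter> sphere 0 1"
  have "compact S" unfolding S_def
    by (intro closed_Int_compact closed_subspace W compact_sphere)
  moreover have "(1 / norm x0) *\<^sub>R x0 \<in> S" using ne W unfolding S_def
    by (auto simp: subspace_scale)
  hence "S \<noteq> {}" by auto
  moreover have "continuous_on S q" unfolding q_def
    by (intro continuous_intros linear_continuous_on matrix_vector_mul_linear)
  ultimately obtain u where uS: "u \<in> S" and umax: "\<And>y. y \<in> S \<Longrightarrow> q y \<le> q u"
    using continuous_attains_sup by metis
  define m where "m = q u"
  have uW: "u \<in> W" and un: "norm u = 1" using uS by (auto simp: S_def)
  have c1: "q x \<le> m * (x \<bullet> x)" if "x \<in> W" for x
  proof (cases "x = 0")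
    case True thus ?thesis by (simp add: q_def)
  next
    case False
    define y where "y = (1 / norm x) *\<^sub>R x"
    have "y \<in> S" using that False W by (auto simp: S_def y_def subspace_scale)
    hence "q y \<le> m" using umax m_def by auto
    moreover have "q y = q x / (norm x)^2"
      by (simp add: q_def y_def matrix_vector_mult_scaleR power2_eq_square)
    moreover have "(norm x)^2 = x \<bullet> x" by (simp add: power2_norm_eq_inner)
    ultimately show ?thesis using False
      by (simp add: divide_le_eq)
  qed
  have c2: "v \<bullet> (m *\<^sub>R u - A *v u) = 0" if vW: "v \<in> W" for v
  proof -
    define c where "c = v \<bullet> (m *\<^sub>R u - A *v u)"
    define p where "p = m * (v \<bullet> v) - q v"
    have p0: "p \<ge> 0" using c1[OF vW] by (simp add: p_def)
    have uu: "u \<bullet> u = 1" using un by (simp add: norm_eq_1)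
    have key: "2 * t * c + t^2 * p \<ge> 0" for t
    proof -
      have "u + t *\<^sub>R v \<in> W" using uW vW W by (simp add: subspace_add subspace_scale)
      hence "q (u + t *\<^sub>R v) \<le> m * ((u + t *\<^sub>R v) \<bullet> (u + t *\<^sub>R v))" by (rule c1)
      moreover have "q (u + t *\<^sub>R v) = q u + 2 * t * (v \<bullet> (A *v u)) + t^2 * q v"
        using sym_inner[OF sym, of u v]
        by (simp add: q_def algebra_simps inner_add_left inner_add_right power2_eq_square)
      moreover have "(u + t *\<^sub>R v) \<bullet> (u + t *\<^sub>R v) = 1 + 2 * t * (v \<bullet> u) + t^2 * (v \<bullet> v)"
        using uu by (simp add: algebra_simps inner_add_left inner_add_right power2_eq_square inner_commute)
      ultimately have "q u + 2 * t * (v \<bullet> (A *v u)) + t^2 * q v \<le> m * (1 + 2 * t * (v \<bullet> u) + t^2 * (v \<bullet> v))"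
        by simp
      thus ?thesis
        by (simp add: c_def p_def m_def inner_diff_right algebra_simps power2_eq_square)
    qed
    have "c = 0"
    proof (rule ccontr)
      assume cn: "c \<noteq> 0"
      define t where "t = - c / (p + 1)"
      have tp: "t * (p + 1) = - c" using p0 unfolding t_def by (simp add: field_simps)
      have "(p+1)^2*(2*t*c + t^2*p) = 2*c*(t*(p+1))*(p+1) + (t*(p+1))^2*p"
        by (simp add: algebra_simps power2_eq_square)
      also have "\<dots> = c^2*(-p-2)" unfolding tp by (simp add: algebra_simps power2_eq_square)
      finally have e: "(p+1)^2*(2*t*c + t^2*p) = c^2*(-p-2)" .
      have "c^2*(-p-2) < 0" using p0 cn by (intro mult_pos_neg) auto
      moreover have "(p+1)^2*(2*t*c + t^2*p) \<ge> 0" using key[of t] by simp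
      ultimately show False using e by linarith
    qed
    thus ?thesis by (simp add: c_def)
  qed
  have "m *\<^sub>R u - A *v u \<in> W" using uW inv W by (simp add: subspace_diff subspace_scale)
  from c2[OF this] have "m *\<^sub>R u - A *v u = 0" by simp
  hence "A *v u = m *\<^sub>R u" by simp
  moreover have "m = u \<bullet> (A *v u)" by (simp add: m_def q_def)
  ultimately show ?thesis using uW un by auto
qed

definition diag :: "(3 \<Rightarrow> real) \<Rightarrow> mat3" where
  "diag d = (\<chi> i j. if i = j then d i else 0)"

lemma entry_PtAQ: fixes A :: "real^'n^'n"
  shows "(transpose P ** A ** Q) $ i $ j = column i P \<bullet> (A *v column j Q)"
  unfolding matrix_matrix_mult_def matrix_vector_mult_def inner_vec_def column_def transpose_def
  by (simp add: sum_distrib_left sum_distrib_right mult.assoc mult.left_commute) (rule sum.swap)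

theorem spectral:
  assumes "sym_mat A"
  shows "\<exists>Q d. rotation Q \<and> A = Q ** diag d ** transpose Q"
proof -
  have sym: "transpose A = A" using assms by (simp add: sym_mat_def)
  obtain u1 where un1: "norm u1 = 1" and e1: "A *v u1 = (u1 \<bullet> (A *v u1)) *\<^sub>R u1"
    using max_eigvec[OF sym subspace_UNIV, of "axis 1 1"] by (auto simp: axis_eq_0_iff)
  define l1 where "l1 = u1 \<bullet> (A *v u1)"
  have e1': "A *v u1 = l1 *\<^sub>R u1" using e1 by (simp add: l1_def)
  define W where "W = {y. orthogonal u1 y}"
  have sW: "subspace W" unfolding W_def by (rule subspace_orthogonal_to_vector)
  have iW: "\<forall>x\<in>W. A *v x \<in> W"
  proof
    fix x assume "x \<in> W"
    hence "u1 \<bullet> x = 0" by (simp add: W_def orthogonal_def)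
    moreover have "u1 \<bullet> (A *v x) = x \<bullet> (A *v u1)" by (rule sym_inner[OF sym])
    ultimately show "A *v x \<in> W" by (simp add: W_def orthogonal_def e1' inner_commute)
  qed
  obtain x0 where x0: "x0 \<noteq> 0" "orthogonal u1 x0"
    using orthogonal_to_vector_exists[of u1] by auto
  obtain u2 where u2W: "u2 \<in> W" and un2: "norm u2 = 1" and e2: "A *v u2 = (u2 \<bullet> (A *v u2)) *\<^sub>R u2"
    using max_eigvec[OF sym sW iW, of x0] x0 by (auto simp: W_def)
  define l2 where "l2 = u2 \<bullet> (A *v u2)"
  have e2': "A *v u2 = l2 *\<^sub>R u2" using e2 by (simp add: l2_def)
  have o12: "u1 \<bullet> u2 = 0" using u2W by (simp add: W_def orthogonal_def)
  define u3 where "u3 = cross3 u1 u2"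
  have o13: "u1 \<bullet> u3 = 0" and o23: "u2 \<bullet> u3 = 0" unfolding u3_def by (simp_all add: dot_cross_self)
  have "(norm u3)^2 = 1" unfolding u3_def norm_cross using un1 un2 o12 by simp
  hence un3: "norm u3 = 1" by (simp add: power2_eq_1_iff) (use norm_ge_zero in smt)
  define Q where "Q = transpose (vector [u1, u2, u3] :: real^3^3)"
  have c1: "column 1 Q = u1" and c2: "column 2 Q = u2" and c3: "column 3 Q = u3"
    unfolding Q_def by (simp_all add: row_def vec_eq_iff)
  have uu: "u1 \<bullet> u1 = 1" "u2 \<bullet> u2 = 1" "u3 \<bullet> u3 = 1"
    using un1 un2 un3 by (simp_all add: norm_eq_1)
  have o': "u2 \<bullet> u1 = 0" "u3 \<bullet> u1 = 0" "u3 \<bullet> u2 = 0" using o12 o13 o23 by (simp_all add: inner_commute)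
  have "transpose Q ** Q = mat 1"
    unfolding matrix_mult_transpose_dot_column
    by (simp add: vec_eq_iff forall_3 mat_def c1 c2 c3 uu o12 o13 o23 o')
  hence oQ: "orthogonal_matrix Q" by (simp add: orthogonal_matrix)
  have "det Q = u1 \<bullet> (cross3 u2 u3)" unfolding Q_def by (simp add: dot_cross_det det_transpose)
  also have "\<dots> = u3 \<bullet> u3" using cross_triple[of u2 u3 u1] cross_triple[of u1 u2 u3]
    by (simp add: u3_def inner_commute)
  also have "\<dots> = 1" using un3 by (simp add: norm_eq_1)
  finally have dQ: "det Q = 1" .
  have rQ: "rotation Q" using oQ dQ by (simp add: rotation_def orthogonal_matrix_def)
  define M where "M = transpose Q ** A ** Q"
  have Me: "M $ i $ j = column i Q \<bullet> (A *v column j Q)" for i j unfolding M_def by (rule entry_PtAQ)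
  have Au3: "u1 \<bullet> (A *v u3) = 0" "u2 \<bullet> (A *v u3) = 0"
    using sym_inner[OF sym, of u1 u3] sym_inner[OF sym, of u2 u3] e1' e2' o13 o23
    by (simp_all add: inner_commute)
  have off: "M $ i $ j = 0" if "i \<noteq> j" for i j
    using that exhaust_3[of i] exhaust_3[of j] Au3 sym_inner[OF sym, of u3 u1] sym_inner[OF sym, of u3 u2]
    by (auto simp: Me c1 c2 c3 e1' e2' o12 o13 o23 inner_commute)
  have Md: "M = diag (\<lambda>i. M $ i $ i)"
    unfolding diag_def vec_eq_iff using off by auto
  have "Q ** M ** transpose Q = (Q ** transpose Q) ** A ** (Q ** transpose Q)"
    unfolding M_def by (simp add: matrix_mul_assoc)
  also have "\<dots> = A" using oQ by (simp add: orthogonal_matrix_def)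
  finally show ?thesis using rQ Md by metis
qed



lemma bb_mm: "bounded_bilinear ((**) :: mat3 \<Rightarrow> mat3 \<Rightarrow> mat3)"
proof -
  have "bilinear ((**) :: mat3 \<Rightarrow> mat3 \<Rightarrow> mat3)"
    unfolding bilinear_def
  proof (intro conjI allI)
    fix A :: mat3
    show "linear ((**) A)"
      by (rule linearI) (simp_all add: matrix_add_ldistrib matrix_scalar_ac scalar_matrix_assoc)
    show "linear (\<lambda>B :: mat3. B ** A)"
      by (rule linearI) (simp_all add: matrix_matrix_mult_def vec_eq_iff sum.distrib algebra_simps scalar_matrix_assoc[symmetric] sum_distrib_left)
  qed
  thus ?thesis by (simp add: bilinear_conv_bounded_bilinear)
qed

definition KK :: real where
  "KK = (SOME K. K > 0 \<and> (\<forall>A :: mat3. \<forall>B :: mat3. norm (A ** B) \<le> norm A * norm B * K))"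

lemma KK: "KK > 0" "norm ((A::mat3) ** (B::mat3)) \<le> norm A * norm B * KK"
proof -
  have "\<exists>K. K > 0 \<and> (\<forall>A :: mat3. \<forall>B :: mat3. norm (A ** B) \<le> norm A * norm B * K)"
    using bounded_bilinear.pos_bounded[OF bb_mm] by blast
  from someI_ex[OF this] show "KK > 0" "norm ((A::mat3) ** (B::mat3)) \<le> norm A * norm B * KK"
    unfolding KK_def by auto
qed

definition c1 :: real where "c1 = norm (mat 1 :: mat3)"

lemma norm_matpow: "norm (matpow A n) \<le> c1 * (KK * norm A) ^ n"
proof (induction n)
  case 0 thus ?case by (simp add: c1_def)
next
  case (Suc n)
  have "norm (matpow A (Suc n)) \<le> norm A * norm (matpow A n) * KK" using KK(2) by simp
  also have "\<dots> \<le> norm A * (c1 * (KK * norm A) ^ n) * KK"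
    using Suc KK(1) by (intro mult_right_mono mult_left_mono) auto
  also have "\<dots> = c1 * (KK * norm A) ^ Suc n" by (simp add: algebra_simps)
  finally show ?case .
qed

lemma summable_exp_bound: "summable (\<lambda>n. c * x ^ n / fact n :: real)"
  using summable_mult[OF summable_exp[of x], of c] by (simp add: field_simps)

lemma summable_mexp: "summable (\<lambda>n. (1 / fact n) *\<^sub>R matpow A n)"
proof (rule summable_comparison_test)
  show "\<exists>N. \<forall>n\<ge>N. norm ((1 / fact n) *\<^sub>R matpow A n) \<le> c1 * (KK * norm A) ^ n / fact n"
    using norm_matpow by (auto simp: divide_le_eq field_simps)
  show "summable (\<lambda>n. c1 * (KK * norm A) ^ n / fact n)" by (rule summable_exp_bound)
qed

lemma mexp_sums: "(\<lambda>n. (1 / fact n) *\<^sub>R matpow A n) sums mexp A"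
  unfolding mexp_def using summable_mexp by (simp add: summable_sums)

primrec dpow :: "mat3 \<Rightarrow> mat3 \<Rightarrow> nat \<Rightarrow> mat3" where
  "dpow X E 0 = 0"
| "dpow X E (Suc n) = E ** matpow X n + X ** dpow X E n"

lemma deriv_matpow: "((\<lambda>X. matpow X n) has_derivative (\<lambda>E. dpow X E n)) (at X within S)"
proof (induction n)
  case 0 thus ?case by simp
next
  case (Suc n)
  have "((\<lambda>Y. Y ** matpow Y n) has_derivative (\<lambda>E. X ** dpow X E n + E ** matpow X n)) (at X within S)"
    by (rule bounded_bilinear.FDERIV[OF bb_mm has_derivative_ident Suc])
  thus ?case by (simp add: add.commute)
qed

lemma norm_dpow_Suc: "norm (dpow X E (Suc n)) \<le> real (Suc n) * c1 * KK ^ Suc n * norm X ^ n * norm E"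
proof (induction n)
  case 0
  have "norm (E ** mat 1) \<le> norm E * c1 * KK" using KK(2)[of E "mat 1"] by (simp add: c1_def)
  thus ?case by (simp add: ac_simps)
next
  case (Suc n)
  have a: "norm (E ** matpow X (Suc n)) \<le> c1 * KK ^ Suc (Suc n) * norm X ^ Suc n * norm E"
  proof -
    have "norm (E ** matpow X (Suc n)) \<le> norm E * norm (matpow X (Suc n)) * KK" by (rule KK(2))
    also have "\<dots> \<le> norm E * (c1 * (KK * norm X) ^ Suc n) * KK"
      using norm_matpow[of X "Suc n"] KK(1) by (intro mult_right_mono mult_left_mono) auto
    finally show ?thesis by (simp add: algebra_simps power_mult_distrib)
  qed
  have b: "norm (X ** dpow X E (Suc n)) \<le> real (Suc n) * c1 * KK ^ Suc (Suc n) * norm X ^ Suc n * norm E"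
  proof -
    have "norm (X ** dpow X E (Suc n)) \<le> norm X * norm (dpow X E (Suc n)) * KK" by (rule KK(2))
    also have "\<dots> \<le> norm X * (real (Suc n) * c1 * KK ^ Suc n * norm X ^ n * norm E) * KK"
      using Suc KK(1) by (intro mult_right_mono mult_left_mono) auto
    finally show ?thesis by (simp add: algebra_simps)
  qed
  have "norm (dpow X E (Suc (Suc n))) \<le> norm (E ** matpow X (Suc n)) + norm (X ** dpow X E (Suc n))"
    by (simp add: norm_triangle_ineq)
  also have "\<dots> \<le> real (Suc (Suc n)) * c1 * KK ^ Suc (Suc n) * norm X ^ Suc n * norm E"
    using a b by (simp add: algebra_simps)
  finally show ?case .
qed

definition mexpD :: "mat3 \<Rightarrow> mat3 \<Rightarrow> mat3" where
  "mexpD X E = (\<Sum>n. (1 / fact n) *\<^sub>R dpow X E n)"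

definition bnd :: "real \<Rightarrow> nat \<Rightarrow> real" where
  "bnd r n = (case n of 0 \<Rightarrow> 0 | Suc m \<Rightarrow> c1 * KK * (KK * r) ^ m / fact m)"

lemma c1_nonneg: "c1 \<ge> 0" by (simp add: c1_def)

lemma bnd_nonneg: "r \<ge> 0 \<Longrightarrow> bnd r n \<ge> 0"
  using KK(1) c1_nonneg by (cases n) (auto simp: bnd_def)

lemma summable_bnd: "summable (bnd r)"
proof -
  have "summable (\<lambda>n. bnd r (Suc n))"
    unfolding bnd_def using summable_exp_bound[of "c1 * KK" "KK * r"] by simp
  thus ?thesis by (simp add: summable_Suc_iff)
qed

lemma norm_term_bnd:
  assumes "norm X \<le> r"
  shows "norm ((1 / fact n) *\<^sub>R dpow X E n) \<le> bnd r n * norm E"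
proof (cases n)
  case 0 thus ?thesis by (simp add: bnd_def)
next
  case (Suc m)
  have "norm ((1 / fact n) *\<^sub>R dpow X E n) = norm (dpow X E (Suc m)) / fact (Suc m)"
    using Suc by simp
  also have "\<dots> \<le> real (Suc m) * c1 * KK ^ Suc m * norm X ^ m * norm E / fact (Suc m)"
    by (intro divide_right_mono norm_dpow_Suc) simp
  also have "\<dots> = c1 * KK * (KK * norm X) ^ m / fact m * norm E"
    by (simp add: field_simps power_mult_distrib del: of_nat_Suc)
  also have "\<dots> \<le> c1 * KK * (KK * r) ^ m / fact m * norm E"
    using assms KK(1) c1_nonneg
    by (intro mult_right_mono divide_right_mono mult_left_mono power_mono) auto
  finally show ?thesis using Suc by (simp add: bnd_def)
qed

lemma summable_dterms: "summable (\<lambda>n. (1 / fact n) *\<^sub>R dpow X E n)"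
proof (rule summable_comparison_test)
  show "\<exists>N. \<forall>n\<ge>N. norm ((1 / fact n) *\<^sub>R dpow X E n) \<le> bnd (norm X) n * norm E"
    using norm_term_bnd by blast
  show "summable (\<lambda>n. bnd (norm X) n * norm E)" by (intro summable_mult2 summable_bnd)
qed

lemma mexp_has_derivative: "(mexp has_derivative mexpD X) (at X)"
proof -
  define r where "r = norm X + 1"
  have r0: "r > 0" using norm_ge_zero[of X] unfolding r_def by linarith
  define S where "S = ball (0::mat3) r"
  have XS: "X \<in> S" by (simp add: S_def r_def)
  have "\<exists>g. \<forall>x\<in>S. (\<lambda>n. (1 / fact n) *\<^sub>R matpow x n) sums (g x) \<and> (g has_derivative mexpD x) (at x within S)"
  proof (rule has_derivative_series[where f' = "\<lambda>n x E. (1 / fact n) *\<^sub>R dpow x E n"])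
    show "convex S" by (simp add: S_def)
    show "((\<lambda>x. (1 / fact n) *\<^sub>R matpow x n) has_derivative (\<lambda>E. (1 / fact n) *\<^sub>R dpow x E n)) (at x within S)"
      for n x by (intro has_derivative_scaleR_right deriv_matpow)
    show "X \<in> S" by (rule XS)
    show "(\<lambda>n. (1 / fact n) *\<^sub>R matpow X n) sums mexp X" by (rule mexp_sums)
    fix e :: real assume e: "e > 0"
    obtain N where N: "\<And>n. n \<ge> N \<Longrightarrow> norm (\<Sum>i. bnd r (i + n)) < e"
      using suminf_exist_split[OF e summable_bnd] by blast
    show "\<forall>\<^sub>F n in sequentially. \<forall>x\<in>S. \<forall>h. norm ((\<Sum>i<n. (1 / fact i) *\<^sub>R dpow x h i) - mexpD x h) \<le> e * norm h"
      unfolding eventually_sequentially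
    proof (intro exI allI impI ballI)
      fix n x h assume nN: "N \<le> n" and xS: "x \<in> S"
      have xr: "norm x \<le> r" using xS by (simp add: S_def)
      have sm: "summable (\<lambda>i. (1 / fact i) *\<^sub>R dpow x h i)" by (rule summable_dterms)
      have "(\<Sum>i<n. (1 / fact i) *\<^sub>R dpow x h i) - mexpD x h = - (\<Sum>i. (1 / fact (i + n)) *\<^sub>R dpow x h (i + n))"
        unfolding mexpD_def using suminf_minus_initial_segment[OF sm, of n] by simp
      hence "norm ((\<Sum>i<n. (1 / fact i) *\<^sub>R dpow x h i) - mexpD x h) = norm (\<Sum>i. (1 / fact (i + n)) *\<^sub>R dpow x h (i + n))"
        by simp
      also have "\<dots> \<le> (\<Sum>i. bnd r (i + n) * norm h)"
        by (rule norm_suminf_le) (use norm_term_bnd[OF xr] summable_bnd in \<open>auto intro: summable_mult2 simp: summable_iff_shift\<close>)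
      also have "\<dots> = (\<Sum>i. bnd r (i + n)) * norm h"
        by (rule suminf_mult2[symmetric]) (simp add: summable_iff_shift summable_bnd)
      also have "\<dots> \<le> e * norm h"
      proof (rule mult_right_mono)
        have "(\<Sum>i. bnd r (i + n)) \<ge> 0"
          using bnd_nonneg r0 by (intro suminf_nonneg) (auto simp: summable_iff_shift summable_bnd less_imp_le)
        thus "(\<Sum>i. bnd r (i + n)) \<le> e" using N[OF nN] by simp
      qed simp
      finally show "norm ((\<Sum>i<n. (1 / fact i) *\<^sub>R dpow x h i) - mexpD x h) \<le> e * norm h" .
    qed
  qed
  then obtain g where g: "\<And>x. x \<in> S \<Longrightarrow> (\<lambda>n. (1 / fact n) *\<^sub>R matpow x n) sums (g x) \<and> (g has_derivative mexpD x) (at x within S)"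
    by blast
  have eq: "\<And>x. x \<in> S \<Longrightarrow> mexp x = g x"
  proof -
    fix x assume "x \<in> S"
    hence "(\<lambda>n. (1 / fact n) *\<^sub>R matpow x n) sums (g x)" using g by blast
    thus "mexp x = g x" using mexp_sums[of x] sums_unique2 by blast
  qed
  have "(g has_derivative mexpD X) (at X within S)" using g[OF XS] by blast
  hence "(mexp has_derivative mexpD X) (at X within S)"
    using has_derivative_transform[of X S mexp g] XS eq by blast
  moreover have "at X within S = at X" by (rule at_within_open[OF XS]) (simp add: S_def)
  ultimately show ?thesis by simp
qed

lemma matpow_comm: "H ** X = X ** H \<Longrightarrow> H ** matpow X n = matpow X n ** H"
proof (induction n)
  case 0 thus ?case by simp
next
  case (Suc n)
  have "H ** matpow X (Suc n) = (H ** X) ** matpow X n" by (simp add: matrix_mul_assoc)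
  also have "\<dots> = X ** (H ** matpow X n)" using Suc.prems by (simp add: matrix_mul_assoc)
  also have "\<dots> = matpow X (Suc n) ** H" using Suc by (simp add: matrix_mul_assoc)
  finally show ?case .
qed

lemma trace_scaleR: "trace (c *\<^sub>R (A::mat3)) = c * trace A"
  by (simp add: trace_def sum_distrib_left)

lemma trace_dpow: "H ** X = X ** H \<Longrightarrow> trace (H ** dpow X E (Suc n)) = real (Suc n) * trace (H ** matpow X n ** E)"
proof (induction n arbitrary: H)
  case 0 thus ?case by simp
next
  case (Suc n)
  have c2: "(H ** X) ** X = X ** (H ** X)" using Suc.prems by (metis matrix_mul_assoc)
  have "trace (H ** dpow X E (Suc (Suc n))) = trace (H ** E ** matpow X (Suc n)) + trace ((H ** X) ** dpow X E (Suc n))"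
    by (simp only: dpow.simps matrix_add_ldistrib trace_add matrix_mul_assoc)
  also have "trace (H ** E ** matpow X (Suc n)) = trace (matpow X (Suc n) ** (H ** E))"
    by (rule trace_mul_sym)
  also have "\<dots> = trace (H ** matpow X (Suc n) ** E)"
    using matpow_comm[OF Suc.prems, of "Suc n"] by (simp add: matrix_mul_assoc)
  also have "trace ((H ** X) ** dpow X E (Suc n)) = real (Suc n) * trace ((H ** X) ** matpow X n ** E)"
    by (rule Suc.IH[OF c2])
  also have "(H ** X) ** matpow X n ** E = H ** matpow X (Suc n) ** E" by (simp add: matrix_mul_assoc)
  finally show ?case by (simp add: algebra_simps)
qed

lemma bl_trace: "bounded_linear (\<lambda>M::mat3. trace (H ** M ** E))"
proof -
  have "linear (\<lambda>M::mat3. trace (H ** M ** E))"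
    by (rule linearI) (simp_all add: matrix_add_ldistrib matrix_matrix_mult_def vec_eq_iff trace_def sum.distrib algebra_simps sum_distrib_left)
  thus ?thesis by (simp add: linear_conv_bounded_linear)
qed

lemma trace_mexpD:
  assumes "H ** X = X ** H"
  shows "trace (H ** mexpD X E) = trace (H ** mexp X ** E)"
proof -
  define a where "a n = trace (H ** ((1 / fact n) *\<^sub>R dpow X E n) ** mat 1)" for n
  have s1: "a sums trace (H ** mexpD X E ** mat 1)"
    unfolding a_def mexpD_def
    by (rule bounded_linear.sums[OF bl_trace]) (rule summable_sums[OF summable_dterms])
  have s2: "(\<lambda>n. trace (H ** ((1 / fact n) *\<^sub>R matpow X n) ** E)) sums trace (H ** mexp X ** E)"
    by (rule bounded_linear.sums[OF bl_trace mexp_sums])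
  have "a (Suc n) = trace (H ** ((1 / fact n) *\<^sub>R matpow X n) ** E)" for n
  proof -
    have "a (Suc n) = (1 / fact (Suc n)) * trace (H ** dpow X E (Suc n))"
      by (simp add: a_def matrix_scalar_ac trace_scaleR scalar_matrix_assoc[symmetric])
    also have "\<dots> = (1 / fact n) * trace (H ** matpow X n ** E)"
      using trace_dpow[OF assms] by (simp add: field_simps del: of_nat_Suc)
    also have "\<dots> = trace (H ** ((1 / fact n) *\<^sub>R matpow X n) ** E)"
      by (simp add: matrix_scalar_ac trace_scaleR scalar_matrix_assoc[symmetric])
    finally show ?thesis .
  qed
  with s2 have "(\<lambda>n. a (Suc n)) sums trace (H ** mexp X ** E)" by simp
  hence "a sums (trace (H ** mexp X ** E) + a 0)" by (simp add: sums_Suc_iff)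
  moreover have "a 0 = 0" by (simp add: a_def trace_def)
  ultimately have "a sums trace (H ** mexp X ** E)" by simp
  with s1 show ?thesis using sums_unique2 by fastforce
qed



lemma diag_mult: "diag a ** diag b = diag (\<lambda>i. a i * b i)"
  by (simp add: diag_def matrix_matrix_mult_def vec_eq_iff sum_3 forall_3)

lemma diag_one: "diag (\<lambda>i. 1) = mat 1"
  by (simp add: diag_def mat_def vec_eq_iff)

lemma diag_transpose: "transpose (diag a) = diag a"
  by (simp add: diag_def transpose_def vec_eq_iff)

lemma diag_mult_left: "(diag a ** M) $ i $ j = a i * M $ i $ j"
  using exhaust_3[of i] by (auto simp: diag_def matrix_matrix_mult_def sum_3)

lemma diag_mult_right: "(M ** diag a) $ i $ j = M $ i $ j * a j"
  using exhaust_3[of j] by (auto simp: diag_def matrix_matrix_mult_def sum_3)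

lemma diag_vec: "(diag a *v y) $ i = a i * y $ i"
  using exhaust_3[of i] by (auto simp: diag_def matrix_vector_mult_def sum_3)

lemma orth_QtQ: "orthogonal_matrix Q \<Longrightarrow> transpose Q ** Q = mat 1"
  and orth_QQt: "orthogonal_matrix Q \<Longrightarrow> Q ** transpose Q = mat 1"
  by (simp_all add: orthogonal_matrix_def)

lemma rotation_orth: "rotation Q \<Longrightarrow> orthogonal_matrix Q"
  by (simp add: rotation_def orthogonal_matrix)

lemma conj_mult:
  assumes "orthogonal_matrix Q"
  shows "(Q ** diag a ** transpose Q) ** (Q ** diag b ** transpose Q) = Q ** diag (\<lambda>i. a i * b i) ** transpose Q"
proof -
  have "(Q ** diag a ** transpose Q) ** (Q ** diag b ** transpose Q) = Q ** diag a ** (transpose Q ** Q) ** diag b ** transpose Q"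
    by (simp add: matrix_mul_assoc)
  also have "\<dots> = Q ** (diag a ** diag b) ** transpose Q"
    by (simp only: orth_QtQ[OF assms] matrix_mul_rid matrix_mul_assoc)
  also have "\<dots> = Q ** diag (\<lambda>i. a i * b i) ** transpose Q"
    by (simp only: diag_mult)
  finally show ?thesis .
qed

lemma matpow_conj:
  assumes "orthogonal_matrix Q"
  shows "matpow (Q ** diag d ** transpose Q) n = Q ** diag (\<lambda>i. d i ^ n) ** transpose Q"
proof (induction n)
  case 0 thus ?case using assms by (simp add: diag_one orth_QQt)
next
  case (Suc n)
  thus ?case using conj_mult[OF assms, of d "\<lambda>i. d i ^ n"] by simp
qed

lemma sym_conj: "sym_mat (Q ** diag c ** transpose Q)"
  by (simp add: sym_mat_def matrix_transpose_mul diag_transpose matrix_mul_assoc)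

lemma inner_Qv: fixes Q :: "real^'n^'m" shows "x \<bullet> (Q *v z) = (transpose Q *v x) \<bullet> z"
  by (simp only: transpose_matrix_vector dot_lmul_matrix)

lemma spd_conj:
  assumes Q: "orthogonal_matrix Q" and c: "\<And>i. c i > 0"
  shows "spd (Q ** diag c ** transpose Q)"
  unfolding spd_def
proof (intro conjI allI impI)
  show "sym_mat (Q ** diag c ** transpose Q)" by (rule sym_conj)
  fix x :: "real^3" assume x: "x \<noteq> 0"
  define y where "y = transpose Q *v x"
  have "Q *v y = x" unfolding y_def by (simp only: matrix_vector_mul_assoc orth_QQt[OF Q] matrix_vector_mul_lid)
  hence "y \<noteq> 0" using x by auto
  then obtain i where yi: "y $ i \<noteq> 0" by (auto simp: vec_eq_iff)
  have e1: "(Q ** diag c ** transpose Q) *v x = Q *v (diag c *v y)"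
    unfolding y_def by (simp only: matrix_vector_mul_assoc matrix_mul_assoc)
  have "x \<bullet> ((Q ** diag c ** transpose Q) *v x) = x \<bullet> (Q *v (diag c *v y))" by (simp only: e1)
  also have "\<dots> = y \<bullet> (diag c *v y)" unfolding y_def by (rule inner_Qv)
  also have "\<dots> = (\<Sum>j\<in>UNIV. c j * (y $ j) ^ 2)"
    by (simp add: inner_vec_def diag_vec power2_eq_square algebra_simps)
  also have "\<dots> > 0"
  proof (rule sum_pos2[of UNIV i])
    show "0 < c i * (y $ i)\<^sup>2" using c[of i] yi by (intro mult_pos_pos) auto
    show "0 \<le> c j * (y $ j)\<^sup>2" for j using c[of j] by (intro mult_nonneg_nonneg) auto
  qed simp_all
  finally show "x \<bullet> ((Q ** diag c ** transpose Q) *v x) > 0" .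
qed

lemma diag_decomp: "diag d = (\<Sum>i\<in>UNIV. d i *\<^sub>R diag (\<lambda>j. if j = i then 1 else 0))"
  by (simp add: diag_def vec_eq_iff sum_3 forall_3)

lemma mexp_diag: "mexp (diag d) = diag (\<lambda>i. exp (d i))"
proof -
  have m: "matpow (diag d) n = diag (\<lambda>i. d i ^ n)" for n
    by (induction n) (simp_all add: diag_one diag_mult)
  have "(\<lambda>n. \<Sum>i\<in>UNIV. (d i ^ n /\<^sub>R fact n) *\<^sub>R diag (\<lambda>j. if j = i then 1 else 0))
        sums (\<Sum>i\<in>UNIV. exp (d i) *\<^sub>R diag (\<lambda>j. if j = i then 1 else 0))"
    by (intro sums_sum sums_scaleR_left exp_converges)
  moreover have "(\<lambda>n. \<Sum>i\<in>UNIV. (d i ^ n /\<^sub>R fact n) *\<^sub>R diag (\<lambda>j. if j = i then 1 else 0))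
      = (\<lambda>n. (1 / fact n) *\<^sub>R matpow (diag d) n)"
    unfolding m by (subst (2) diag_decomp) (simp add: scaleR_sum_right divide_inverse_commute)
  ultimately have "(\<lambda>n. (1 / fact n) *\<^sub>R matpow (diag d) n) sums diag (\<lambda>i. exp (d i))"
    by (simp add: diag_decomp[symmetric])
  thus ?thesis using mexp_sums sums_unique2 by blast
qed

lemma mexp_conj:
  assumes Q: "orthogonal_matrix Q"
  shows "mexp (Q ** diag d ** transpose Q) = Q ** diag (\<lambda>i. exp (d i)) ** transpose Q"
proof -
  have bl: "bounded_linear (\<lambda>M::mat3. Q ** M ** transpose Q)"
    by (rule bounded_linear_compose[OF bounded_bilinear.bounded_linear_left[OF bb_mm] bounded_bilinear.bounded_linear_right[OF bb_mm]])
  have S: "(\<lambda>n. Q ** ((1 / fact n) *\<^sub>R matpow (diag d) n) ** transpose Q) sums (Q ** mexp (diag d) ** transpose Q)"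
    by (rule bounded_linear.sums[OF bl mexp_sums])
  have eqn: "Q ** ((1 / fact n) *\<^sub>R matpow (diag d) n) ** transpose Q = (1 / fact n) *\<^sub>R matpow (Q ** diag d ** transpose Q) n" for n
  proof -
    have m: "matpow (diag d) n = diag (\<lambda>i. d i ^ n)"
      by (induction n) (simp_all add: diag_one diag_mult)
    show ?thesis unfolding matpow_conj[OF Q] m
      by (simp add: matrix_scalar_ac scalar_matrix_assoc)
  qed
  have "(\<lambda>n. Q ** ((1 / fact n) *\<^sub>R matpow (diag d) n) ** transpose Q) = (\<lambda>n. (1 / fact n) *\<^sub>R matpow (Q ** diag d ** transpose Q) n)"
    by (rule ext) (rule eqn)
  with S have "(\<lambda>n. (1 / fact n) *\<^sub>R matpow (Q ** diag d ** transpose Q) n) sums (Q ** mexp (diag d) ** transpose Q)"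
    by (simp only:)
  from sums_unique2[OF mexp_sums this] show ?thesis by (simp only: mexp_diag)
qed

lemma eig_col:
  assumes Q: "orthogonal_matrix Q"
  shows "(Q ** diag b ** transpose Q) *v column k Q = b k *\<^sub>R column k Q"
proof -
  have "(Q ** diag b ** transpose Q) *v column k Q = (Q ** diag b ** (transpose Q ** Q)) *v axis k 1"
    by (simp only: matrix_vector_mult_basis[symmetric] matrix_vector_mul_assoc matrix_mul_assoc)
  also have "\<dots> = Q *v (diag b *v axis k 1)"
    by (simp only: orth_QtQ[OF Q] matrix_mul_rid matrix_vector_mul_assoc)
  also have "diag b *v axis k 1 = b k *\<^sub>R axis k 1"
    by (simp add: vec_eq_iff diag_vec axis_def)
  also have "Q *v (b k *\<^sub>R axis k 1) = b k *\<^sub>R column k Q"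
    by (simp add: matrix_vector_mult_scaleR matrix_vector_mult_basis)
  finally show ?thesis .
qed

lemma eig_transfer:
  assumes P: "orthogonal_matrix P"
    and e: "(P ** diag a ** transpose P) *v v = c *\<^sub>R v"
    and ab: "\<And>i. a i = c \<Longrightarrow> b i = c'"
  shows "(P ** diag b ** transpose P) *v v = c' *\<^sub>R v"
proof -
  define w where "w = transpose P *v v"
  have v: "v = P *v w" unfolding w_def by (simp only: matrix_vector_mul_assoc orth_QQt[OF P] matrix_vector_mul_lid)
  have Ma: "(P ** diag m ** transpose P) *v v = P *v (diag m *v w)" for m
    unfolding w_def by (simp only: matrix_vector_mul_assoc matrix_mul_assoc)
  have "P *v (diag a *v w) = c *\<^sub>R v" using e Ma[of a] by simp
  also have "\<dots> = P *v (c *\<^sub>R w)" by (simp only: v[symmetric] matrix_vector_mult_scaleR)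
  finally have "P *v (diag a *v w) = P *v (c *\<^sub>R w)" .
  hence "transpose P *v (P *v (diag a *v w)) = transpose P *v (P *v (c *\<^sub>R w))" by simp
  moreover have tp: "transpose P *v (P *v u) = u" for u
    by (simp only: matrix_vector_mul_assoc orth_QtQ[OF P] matrix_vector_mul_lid)
  ultimately have da: "diag a *v w = c *\<^sub>R w" by (simp only: tp)
  have "diag b *v w = c' *\<^sub>R w"
  proof (subst vec_eq_iff, intro allI)
    fix i
    have "a i * w $ i = c * w $ i" using da by (simp add: vec_eq_iff diag_vec)
    thus "(diag b *v w) $ i = (c' *\<^sub>R w) $ i"
      using ab[of i] by (cases "w $ i = 0") (auto simp: diag_vec)
  qed
  hence "(P ** diag b ** transpose P) *v v = P *v (c' *\<^sub>R w)" by (simp only: Ma)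
  also have "\<dots> = c' *\<^sub>R (P *v w)" by (rule matrix_vector_mult_scaleR)
  also have "\<dots> = c' *\<^sub>R v" by (simp only: v[symmetric])
  finally show ?thesis .
qed

lemma cols_eq: "(\<And>k. column k (A::mat3) = column k B) \<Longrightarrow> A = B"
  by (simp add: vec_eq_iff column_def)

lemma eq_on_cols:
  assumes Q: "orthogonal_matrix Q" and e: "\<And>k. A *v column k Q = B *v column k Q"
  shows "A = (B::mat3)"
proof -
  have c: "column k (A ** Q) = A *v column k Q" for A k
    by (metis matrix_vector_mult_basis matrix_vector_mul_assoc)
  have "A ** Q = B ** Q" by (rule cols_eq) (simp add: c e)
  hence "A ** Q ** transpose Q = B ** Q ** transpose Q" by simp
  thus ?thesis by (simp only: matrix_mul_assoc[symmetric] orth_QQt[OF Q] matrix_mul_rid)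
qed



lemma cQ1: assumes "orthogonal_matrix Q" shows "(A::mat3) ** transpose Q ** Q = A"
  by (simp only: matrix_mul_assoc[symmetric] orth_QtQ[OF assms] matrix_mul_rid)
lemma cQ2: assumes "orthogonal_matrix Q" shows "(A::mat3) ** Q ** transpose Q = A"
  by (simp only: matrix_mul_assoc[symmetric] orth_QQt[OF assms] matrix_mul_rid)

lemma eigpos:
  assumes A: "spd A" and Q: "orthogonal_matrix Q" and e: "A = Q ** diag b ** transpose Q"
  shows "b k > 0"
proof -
  define q where "q = column k Q"
  have "norm q = 1" using Q unfolding q_def orthogonal_matrix_orthonormal_columns by blast
  hence q0: "q \<noteq> 0" and qq: "q \<bullet> q = 1" by (auto simp: norm_eq_1)
  have "A *v q = b k *\<^sub>R q" unfolding q_def e by (rule eig_col[OF Q])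
  hence "q \<bullet> (A *v q) = b k" using qq by simp
  moreover have "q \<bullet> (A *v q) > 0" using A q0 by (simp add: spd_def)
  ultimately show ?thesis by simp
qed

lemma mexp_spd:
  assumes "sym_mat X" shows "spd (mexp X)"
proof -
  obtain Q d where Q: "rotation Q" and X: "X = Q ** diag d ** transpose Q"
    using spectral[OF assms] by blast
  have oQ: "orthogonal_matrix Q" using Q by (rule rotation_orth)
  show ?thesis unfolding X mexp_conj[OF oQ] by (rule spd_conj[OF oQ]) simp
qed

lemma mexp_Sym: "mexp ` Sym \<subseteq> Sym"
  using mexp_spd by (auto simp: Sym_def spd_def)

lemma chain:
  fixes \<alpha> :: "mat3 \<Rightarrow> real" and h :: "mat3 \<Rightarrow> mat3"
  assumes grad: "\<And>C. spd C \<Longrightarrow>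
       (\<alpha> has_derivative (\<lambda>dC. trace (h C ** dC))) (at C within Sym)"
    and X: "sym_mat X"
  shows "((\<alpha> \<circ> mexp) has_derivative (\<lambda>\<delta>. trace (h (mexp X) ** mexpD X \<delta>))) (at X within Sym)"
proof -
  have d1: "(mexp has_derivative mexpD X) (at X within Sym)"
    by (rule has_derivative_at_withinI[OF mexp_has_derivative])
  have d2: "(\<alpha> has_derivative (\<lambda>dC. trace (h (mexp X) ** dC))) (at (mexp X) within (mexp ` Sym))"
    by (rule has_derivative_subset[OF grad[OF mexp_spd[OF X]] mexp_Sym])
  from diff_chain_within[OF d1 d2] show ?thesis by (simp add: o_def)
qed

definition s1 :: "3 \<Rightarrow> real" where "s1 i = (if i = 1 then 1 else -1)"
definition s2 :: "3 \<Rightarrow> real" where "s2 i = (if i = 2 then 1 else -1)"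

lemma det_diag3_aux: "det (diag s) = prod (\<lambda>i. diag s $ i $ i) UNIV"
  by (rule det_diagonal) (simp add: diag_def)

lemma prod3: "prod f (UNIV::3 set) = f 1 * f 2 * f 3" unfolding UNIV_3 by (simp add: ac_simps)

lemma det_diag3: "det (diag s) = s 1 * s 2 * s 3"
  unfolding det_diag3_aux prod3 by (simp add: diag_def)

lemma rot_s:
  assumes Q: "rotation Q" and s: "\<And>i. s i * s i = 1" and d: "s 1 * s 2 * s 3 = 1"
  shows "rotation (Q ** diag s ** transpose Q)"
proof -
  have oQ: "orthogonal_matrix Q" using Q by (rule rotation_orth)
  have t: "transpose (Q ** diag s ** transpose Q) = Q ** diag s ** transpose Q"
    using sym_conj[of Q s] unfolding sym_mat_def .
  have "(Q ** diag s ** transpose Q) ** (Q ** diag s ** transpose Q) = mat 1"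
    unfolding conj_mult[OF oQ] s diag_one using oQ by (simp add: orth_QQt cQ2)
  hence tt: "transpose (Q ** diag s ** transpose Q) ** (Q ** diag s ** transpose Q) = mat 1"
    by (simp only: t)
  have ds: "det (diag s) = 1" using det_diag3[of s] d by simp
  have dQ: "det Q = 1" using Q by (simp add: rotation_def)
  have "det (Q ** diag s ** transpose Q) = det Q * det (diag s) * det Q"
    by (simp only: det_mul det_transpose)
  also have "\<dots> = 1" by (simp only: ds dQ mult_1_left mult_1_right)
  finally have "det (Q ** diag s ** transpose Q) = 1" .
  with tt show ?thesis unfolding rotation_def by (rule conjI)
qed

lemma h_diag:
  fixes h :: "mat3 \<Rightarrow> mat3"
  assumes iso: "\<And>R C. rotation R \<Longrightarrow> spd C \<Longrightarrow>
       transpose R ** h C ** R = h (transpose R ** C ** R)"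
    and Q: "rotation Q" and B: "spd B" and Bd: "B = Q ** diag b ** transpose Q"
  shows "h B = Q ** diag (\<lambda>i. (transpose Q ** h B ** Q) $ i $ i) ** transpose Q"
proof -
  have oQ: "orthogonal_matrix Q" using Q by (rule rotation_orth)
  define H where "H = h B"
  define M where "M = transpose Q ** H ** Q"
  have inv: "diag s ** M ** diag s = M" if s: "\<And>i. s i * s i = 1" "s 1 * s 2 * s 3 = 1" for s
  proof -
    define R where "R = Q ** diag s ** transpose Q"
    have rR: "rotation R" unfolding R_def by (rule rot_s[OF Q s])
    have tR: "transpose R = R" unfolding R_def using sym_conj[of Q s] unfolding sym_mat_def .
    have "transpose R ** B ** R = R ** B ** R" by (simp only: tR)
    also have "\<dots> = Q ** diag (\<lambda>i. s i * b i * s i) ** transpose Q"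
      unfolding R_def Bd by (simp only: conj_mult[OF oQ])
    also have "\<dots> = B" unfolding Bd using s(1) by (simp add: mult.commute mult.left_commute)
    finally have "transpose R ** H ** R = H" using iso[OF rR B] by (simp add: H_def)
    hence "transpose Q ** (R ** H ** R) ** Q = M" by (simp add: M_def tR)
    moreover have "transpose Q ** (R ** H ** R) ** Q = diag s ** M ** diag s"
      unfolding R_def M_def
      by (simp only: matrix_mul_assoc orth_QtQ[OF oQ] cQ1[OF oQ] matrix_mul_lid)
    ultimately show ?thesis by simp
  qed
  have e: "s i * M $ i $ j * s j = M $ i $ j" if "\<And>i. s i * s i = 1" "s 1 * s 2 * s 3 = 1" for s i j
    using inv[OF that] by (metis diag_mult_left diag_mult_right)
  have e1: "s1 i * M $ i $ j * s1 j = M $ i $ j" for i j by (rule e) (simp_all add: s1_def)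
  have e2: "s2 i * M $ i $ j * s2 j = M $ i $ j" for i j by (rule e) (simp_all add: s2_def)
  have off: "M $ i $ j = 0" if "i \<noteq> j" for i j
    using that exhaust_3[of i] exhaust_3[of j] e1[of i j] e2[of i j]
    by (auto simp: s1_def s2_def)
  have Md: "M = diag (\<lambda>i. M $ i $ i)" unfolding diag_def vec_eq_iff using off by auto
  have "H = Q ** M ** transpose Q" unfolding M_def
    by (simp only: matrix_mul_assoc orth_QQt[OF oQ] cQ2[OF oQ] matrix_mul_lid)
  also have "\<dots> = Q ** diag (\<lambda>i. M $ i $ i) ** transpose Q" by (subst Md) (rule refl)
  finally show ?thesis unfolding H_def M_def .
qed

lemma conj_comm:
  assumes "orthogonal_matrix Q"
  shows "(Q ** diag m ** transpose Q) ** (Q ** diag c ** transpose Q) = (Q ** diag c ** transpose Q) ** (Q ** diag m ** transpose Q)"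
  unfolding conj_mult[OF assms] by (simp add: mult.commute)

theorem theorem2:
  fixes \<alpha> :: "mat3 \<Rightarrow> real" and h :: "mat3 \<Rightarrow> mat3"
  assumes h_sym: "\<And>C. spd C \<Longrightarrow> sym_mat (h C)"
    and grad: "\<And>C. spd C \<Longrightarrow>
       (\<alpha> has_derivative (\<lambda>dC. trace (h C ** dC))) (at C within Sym)"
    and iso: "\<And>R C. rotation R \<Longrightarrow> spd C \<Longrightarrow>
       transpose R ** h C ** R = h (transpose R ** C ** R)"
  shows "(\<forall>X. sym_mat X \<longrightarrow> (\<alpha> \<circ> mexp) differentiable (at X within Sym))
    \<and> (\<forall>B. spd B \<longrightarrow>
        ((\<alpha> \<circ> mexp) has_derivative
           (\<lambda>\<delta>. trace ((msqrt B ** h B ** msqrt B) ** \<delta>))) (at (mln B) within Sym))"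
proof (intro conjI allI impI)
  fix X assume "sym_mat X"
  from chain[OF grad this] show "(\<alpha> \<circ> mexp) differentiable (at X within Sym)"
    by (rule differentiableI)
next
  fix B assume B: "spd B"
  obtain Q b where Q: "rotation Q" and Bd: "B = Q ** diag b ** transpose Q"
    using spectral[of B] B unfolding spd_def by blast
  have oQ: "orthogonal_matrix Q" using Q by (rule rotation_orth)
  have bpos: "b i > 0" for i by (rule eigpos[OF B oQ Bd])
  define L where "L = Q ** diag (\<lambda>i. ln (b i)) ** transpose Q"
  define S where "S = Q ** diag (\<lambda>i. sqrt (b i)) ** transpose Q"
  have symL: "sym_mat L" unfolding L_def by (rule sym_conj)
  have expL: "mexp L = B" unfolding L_def mexp_conj[OF oQ] Bd using bpos by simp
  have mlnB: "mln B = L"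
    unfolding mln_def
  proof (rule the_equality)
    show "sym_mat L \<and> mexp L = B" using symL expL by simp
    fix L2 assume L2: "sym_mat L2 \<and> mexp L2 = B"
    obtain P l where P: "rotation P" and L2d: "L2 = P ** diag l ** transpose P"
      using spectral[of L2] L2 by blast
    have oP: "orthogonal_matrix P" using P by (rule rotation_orth)
    show "L2 = L"
    proof (rule eq_on_cols[OF oQ])
      fix k
      have "(P ** diag (\<lambda>i. exp (l i)) ** transpose P) *v column k Q = b k *\<^sub>R column k Q"
        using L2 eig_col[OF oQ, of b k] unfolding L2d mexp_conj[OF oP] Bd by simp
      hence "(P ** diag l ** transpose P) *v column k Q = ln (b k) *\<^sub>R column k Q"
        by (rule eig_transfer[OF oP]) (metis ln_exp)
      thus "L2 *v column k Q = L *v column k Q"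
        unfolding L2d L_def eig_col[OF oQ] .
    qed
  qed
  have spdS: "spd S" unfolding S_def by (rule spd_conj[OF oQ]) (simp add: bpos)
  have SS: "S ** S = B" unfolding S_def conj_mult[OF oQ] Bd using bpos
    by (simp add: less_imp_le)
  have msqrtB: "msqrt B = S"
    unfolding msqrt_def
  proof (rule the_equality)
    show "spd S \<and> S ** S = B" using spdS SS by simp
    fix S2 assume S2: "spd S2 \<and> S2 ** S2 = B"
    obtain P l where P: "rotation P" and S2d: "S2 = P ** diag l ** transpose P"
      using spectral[of S2] S2 unfolding spd_def by blast
    have oP: "orthogonal_matrix P" using P by (rule rotation_orth)
    have lpos: "l i > 0" for i using S2 oP S2d by (intro eigpos) auto
    show "S2 = S"
    proof (rule eq_on_cols[OF oQ])
      fix k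
      have "(P ** diag (\<lambda>i. l i * l i) ** transpose P) *v column k Q = b k *\<^sub>R column k Q"
        using S2 eig_col[OF oQ, of b k] unfolding S2d conj_mult[OF oP] Bd by simp
      hence "(P ** diag l ** transpose P) *v column k Q = sqrt (b k) *\<^sub>R column k Q"
      proof (rule eig_transfer[OF oP])
        fix i assume "l i * l i = b k"
        thus "l i = sqrt (b k)" using lpos[of i] by (metis abs_of_pos real_sqrt_abs2 power2_eq_square)
      qed
      thus "S2 *v column k Q = S *v column k Q"
        unfolding S2d S_def eig_col[OF oQ] .
    qed
  qed
  define m where "m i = (transpose Q ** h B ** Q) $ i $ i" for i
  have Hd: "h B = Q ** diag m ** transpose Q"
    unfolding m_def by (rule h_diag[OF iso Q B Bd])
  have HL: "h B ** L = L ** h B" unfolding Hd L_def by (rule conj_comm[OF oQ])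
  have HS: "h B ** S = S ** h B" unfolding Hd S_def by (rule conj_comm[OF oQ])
  have der: "((\<alpha> \<circ> mexp) has_derivative (\<lambda>\<delta>. trace (h (mexp L) ** mexpD L \<delta>))) (at L within Sym)"
    by (rule chain[OF grad symL])
  have eqf: "(\<lambda>\<delta>. trace (h (mexp L) ** mexpD L \<delta>)) = (\<lambda>\<delta>. trace ((msqrt B ** h B ** msqrt B) ** \<delta>))"
  proof
    fix \<delta>
    have "trace (h (mexp L) ** mexpD L \<delta>) = trace (h B ** mexp L ** \<delta>)"
      using trace_mexpD[OF HL, of \<delta>] unfolding expL .
    also have "h B ** mexp L = msqrt B ** h B ** msqrt B"
      unfolding msqrtB expL
    proof -
      have "S ** h B ** S = h B ** S ** S" using HS by (simp add: matrix_mul_assoc)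
      also have "\<dots> = h B ** B" using SS by (simp add: matrix_mul_assoc[symmetric])
      finally show "h B ** B = S ** h B ** S" by simp
    qed
    finally show "trace (h (mexp L) ** mexpD L \<delta>) = trace ((msqrt B ** h B ** msqrt B) ** \<delta>)" .
  qed
  show "((\<alpha> \<circ> mexp) has_derivative (\<lambda>\<delta>. trace ((msqrt B ** h B ** msqrt B) ** \<delta>))) (at (mln B) within Sym)"
    using der unfolding mlnB eqf .
qed


end
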